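(* Let $\mathbb{K}$ be a field and $f=a_0(x)+a_1(x)y+\cdots+a_n(x)y^n\in\mathbb{K}[x,y]$ with $n\geq 2$, $a_0,\ldots,a_n\in\mathbb{K}[x]$, $a_0a_n\neq 0$, such that $f$ has no nonconstant factor in $\mathbb{K}[x]$ and $\deg a_n>\max\{\deg a_0,\ldots,\deg a_{n-1}\}$. If $a_n$ is irreducible in $\mathbb{K}[x]$, or if $a_0$ is irreducible in $\mathbb{K}[x]$ and $\deg a_0\geq\deg a_n-\deg q$, where $q\in\mathbb{K}[x]$ is an irreducible factor of $a_n$ of smallest degree, then $f$ is irreducible over $\mathbb{K}[x]$.
   Context: $f$ is regarded as a polynomial in $y$ with coefficients in $\mathbb{K}[x]$; irreducibility over $\mathbb{K}[x]$ means irreducibility in $\mathbb{K}[x][y]$. *)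

theory Defs
  imports "HOL-Computational_Algebra.Polynomial_Factorial"
begin

end

theory Submission
  imports Defs
begin

lemma coeff_mult_top:
  fixes a b :: "'a::idom poly"
  assumes "degree a \<le> d1" "degree b \<le> d2"
  shows "coeff (a * b) (d1 + d2) = coeff a d1 * coeff b d2"
proof (cases "degree a = d1 \<and> degree b = d2")
  case True thus ?thesis using coeff_mult_degree_sum[of a b] by simp
next
  case False
  hence "degree a < d1 \<or> degree b < d2" using assms by auto
  moreover have "degree (a*b) \<le> degree a + degree b" by (rule degree_mult_le)
  ultimately have "degree (a*b) < d1 + d2" using assms by auto
  thus ?thesis using \<open>degree a < d1 \<or> degree b < d2\<close>
    by (auto simp: coeff_eq_0)
qed

lemma exists_top:
  fixes g :: "'a::idom poly poly"
  assumes "g \<noteq> 0"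
  shows "\<exists>d. (\<forall>i. degree (coeff g i) \<le> d) \<and> (\<exists>i. coeff (coeff g i) d \<noteq> 0)"
proof -
  define S where "S = {i. coeff g i \<noteq> 0}"
  have fin: "finite S" unfolding S_def
    by (rule finite_subset[of _ "{..degree g}"]) (auto intro: le_degree)
  have ne: "S \<noteq> {}" using assms unfolding S_def
    by (metis (mono_tags) empty_iff leading_coeff_0_iff mem_Collect_eq)
  define d where "d = Max ((\<lambda>i. degree (coeff g i)) ` S)"
  have le: "\<forall>i. degree (coeff g i) \<le> d"
  proof
    fix i show "degree (coeff g i) \<le> d"
    proof (cases "i \<in> S")
      case True thus ?thesis unfolding d_def using fin by auto
    next
      case False thus ?thesis unfolding S_def by auto
    qed
  qed
  have "d \<in> (\<lambda>i. degree (coeff g i)) ` S" unfolding d_def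
    by (rule Max_in) (use fin ne in auto)
  then obtain i where i: "i \<in> S" "d = degree (coeff g i)" by blast
  hence "coeff (coeff g i) d \<noteq> 0" unfolding S_def by auto
  thus ?thesis using le by blast
qed

lemma top_split:
  fixes g h :: "'a::field poly poly"
  assumes gh: "g * h = f" and g0: "g \<noteq> 0" and h0: "h \<noteq> 0"
    and dg: "\<forall>i<degree f. degree (coeff f i) < degree (coeff f (degree f))"
  shows "\<forall>i. i \<noteq> degree g \<longrightarrow> coeff g i = 0 \<or> degree (coeff g i) < degree (coeff g (degree g))"
proof -
  obtain d1 where d1: "\<forall>i. degree (coeff g i) \<le> d1" "\<exists>i. coeff (coeff g i) d1 \<noteq> 0"
    using exists_top[OF g0] by blast
  obtain d2 where d2: "\<forall>i. degree (coeff h i) \<le> d2" "\<exists>i. coeff (coeff h i) d2 \<noteq> 0"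
    using exists_top[OF h0] by blast
  define G where "G = map_poly (\<lambda>p. coeff p d1) g"
  define H where "H = map_poly (\<lambda>p. coeff p d2) h"
  have cG: "coeff G i = coeff (coeff g i) d1" for i unfolding G_def by (simp add: coeff_map_poly)
  have cH: "coeff H i = coeff (coeff h i) d2" for i unfolding H_def by (simp add: coeff_map_poly)
  have G0: "G \<noteq> 0" using d1(2) cG by (metis coeff_0)
  have H0: "H \<noteq> 0" using d2(2) cH by (metis coeff_0)
  define F where "F = G * H"
  have F0: "F \<noteq> 0" using G0 H0 F_def by simp
  have key: "coeff (coeff f k) (d1 + d2) = coeff F k" for k
  proof -
    have "coeff (coeff f k) (d1 + d2) = (\<Sum>i\<le>k. coeff (coeff g i * coeff h (k - i)) (d1 + d2))"
      unfolding gh[symmetric] coeff_mult coeff_sum by simp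
    also have "\<dots> = (\<Sum>i\<le>k. coeff G i * coeff H (k - i))"
      using d1(1) d2(1) by (intro sum.cong refl) (simp add: coeff_mult_top cG cH)
    also have "\<dots> = coeff F k" unfolding F_def coeff_mult ..
    finally show ?thesis .
  qed
  have degle: "degree (coeff f k) \<le> d1 + d2" for k
  proof -
    have "coeff f k = (\<Sum>i\<le>k. coeff g i * coeff h (k - i))"
      unfolding gh[symmetric] coeff_mult ..
    also have "degree \<dots> \<le> d1 + d2"
      apply (rule degree_sum_le, simp)
      by (meson add_mono d1(1) d2(1) degree_mult_le order_trans)
    finally show ?thesis .
  qed
  have Fz: "coeff F k = 0" if "k \<noteq> degree f" for k
  proof (rule ccontr)
    assume nz: "coeff F k \<noteq> 0"
    hence c: "coeff (coeff f k) (d1 + d2) \<noteq> 0" using key by simp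
    hence "coeff f k \<noteq> 0" by auto
    hence "k \<le> degree f" by (rule le_degree)
    hence "k < degree f" using that by simp
    hence "degree (coeff f k) < degree (coeff f (degree f))" using dg by simp
    moreover have "d1 + d2 \<le> degree (coeff f k)" using c by (rule le_degree)
    moreover have "degree (coeff f (degree f)) \<le> d1 + d2" by (rule degle)
    ultimately show False by simp
  qed
  have "F = monom (coeff F (degree f)) (degree f)"
    by (rule poly_eqI) (auto simp: Fz)
  moreover have "coeff F (degree f) \<noteq> 0"
    using F0 Fz by (metis leading_coeff_0_iff)
  ultimately have oF: "order 0 F = degree f" by (metis order_0_monom)
  have "order 0 F = order 0 G + order 0 H" unfolding F_def using F0 F_def order_mult by blast
  moreover have "order 0 G \<le> degree G" using G0 by (rule order_degree)
  moreover have "order 0 H \<le> degree H" using H0 by (rule order_degree)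
  moreover have "degree G \<le> degree g" unfolding G_def by (rule map_poly_degree_leq)
  moreover have "degree H \<le> degree h" unfolding H_def by (rule map_poly_degree_leq)
  moreover have "degree f = degree g + degree h" using gh g0 h0 degree_mult_eq by metis
  ultimately have oG: "order 0 G = degree g" and dG: "degree G = degree g" using oF by linarith+
  have Gz: "coeff G i = 0" if "i \<noteq> degree g" for i
  proof (cases "i < degree g")
    case True
    have "monom 1 (degree g) dvd G" using monom_1_dvd_iff[OF G0] oG by simp
    thus ?thesis using monom_1_dvd_iff' True by blast
  next
    case False thus ?thesis using that dG by (simp add: coeff_eq_0)
  qed
  have Gs: "coeff (coeff g (degree g)) d1 \<noteq> 0" using G0 dG cG by (metis leading_coeff_0_iff)
  hence ds: "degree (coeff g (degree g)) = d1" using d1(1) le_degree by (metis antisym)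
  show ?thesis
  proof (intro allI impI)
    fix i assume i: "i \<noteq> degree g"
    have "coeff (coeff g i) d1 = 0" using Gz[OF i] cG by simp
    moreover have "degree (coeff g i) \<le> d1" using d1(1) by simp
    ultimately show "coeff g i = 0 \<or> degree (coeff g i) < degree (coeff g (degree g))"
      using ds by (metis leading_coeff_0_iff order_le_less)
  qed
qed

lemma irreducible_factor_exists:
  fixes p :: "'a::field poly"
  assumes "p \<noteq> 0" "\<not> is_unit p"
  shows "\<exists>r. r dvd p \<and> irreducible r"
proof -
  have "\<exists>r. (r dvd p \<and> \<not> is_unit r) \<and> (\<forall>r'. r' dvd p \<and> \<not> is_unit r' \<longrightarrow> degree r \<le> degree r')"
    using ex_has_least_nat[of "\<lambda>r. r dvd p \<and> \<not> is_unit r" p degree] assms by auto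
  then obtain r where r: "r dvd p" "\<not> is_unit r"
    and rmin: "\<And>r'. r' dvd p \<Longrightarrow> \<not> is_unit r' \<Longrightarrow> degree r \<le> degree r'" by blast
  have r0: "r \<noteq> 0" using r(1) assms(1) by auto
  have "irreducible r"
  proof (rule irreducibleI)
    show "r \<noteq> 0" by (rule r0)
    show "\<not> is_unit r" by (rule r(2))
    fix a b assume rab: "r = a * b"
    have a0: "a \<noteq> 0" and b0: "b \<noteq> 0" using r0 rab by auto
    show "is_unit a \<or> is_unit b"
    proof (rule ccontr)
      assume "\<not> (is_unit a \<or> is_unit b)"
      hence na: "\<not> is_unit a" and nb: "\<not> is_unit b" by auto
      have "degree b > 0" using nb is_unit_iff_degree[OF b0] by simp
      moreover have "degree r = degree a + degree b" using rab a0 b0 degree_mult_eq by metis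
      moreover have "a dvd p" using r(1) rab by (metis dvd_mult_left)
      hence "degree r \<le> degree a" using rmin na by blast
      ultimately show False by simp
    qed
  qed
  thus ?thesis using r(1) by blast
qed

theorem corollary4:
  fixes f :: "'a::field poly poly" and n :: nat
  assumes deg: "degree f = n" and n2: "n \<ge> 2"
    and nz: "coeff f 0 * coeff f n \<noteq> 0"
    and content: "\<forall>g :: 'a poly. [:g:] dvd f \<longrightarrow> degree g = 0"
    and degs: "\<forall>i<n. degree (coeff f i) < degree (coeff f n)"
    and cases: "irreducible (coeff f n) \<or>
       (irreducible (coeff f 0) \<and>
        (\<exists>q :: 'a poly. irreducible q \<and> q dvd coeff f n \<and>
           (\<forall>r. irreducible r \<and> r dvd coeff f n \<longrightarrow> degree q \<le> degree r) \<and>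
           degree (coeff f 0) + degree q \<ge> degree (coeff f n)))"
  shows "irreducible f"
proof (rule irreducibleI)
  show f0: "f \<noteq> 0" using nz by auto
  show "\<not> is_unit f" using is_unit_poly_iff[of f] deg n2 by auto
  fix g h assume fgh: "f = g * h"
  have g0: "g \<noteq> 0" and h0: "h \<noteq> 0" using f0 fgh by auto
  have const_unit: "is_unit p" if "degree p = 0" "p dvd f" for p :: "'a poly poly"
  proof -
    define b where "b = coeff p 0"
    have b: "p = [:b:]" unfolding b_def using degree_0_id[OF that(1)] by simp
    have "[:b:] dvd f" using that(2) b by simp
    hence "degree b = 0" using content by blast
    moreover have "b \<noteq> 0" using b that(2) f0 by auto
    ultimately have "is_unit b" using is_unit_iff_degree by blast
    thus ?thesis using b by (simp add: is_unit_const_poly_iff)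
  qed
  show "is_unit g \<or> is_unit h"
  proof (rule ccontr)
    assume "\<not> (is_unit g \<or> is_unit h)"
    hence s1: "degree g \<noteq> 0" and t1: "degree h \<noteq> 0" using const_unit[of g] const_unit[of h] fgh by auto
    have dgf: "\<forall>i<degree f. degree (coeff f i) < degree (coeff f (degree f))" using degs deg by simp
    have Pg: "\<forall>i. i \<noteq> degree g \<longrightarrow> coeff g i = 0 \<or> degree (coeff g i) < degree (coeff g (degree g))"
      using top_split[OF fgh[symmetric] g0 h0 dgf] .
    have Ph: "\<forall>i. i \<noteq> degree h \<longrightarrow> coeff h i = 0 \<or> degree (coeff h i) < degree (coeff h (degree h))"
      using top_split[of h g f] fgh h0 g0 dgf by (simp add: mult.commute)
    define bs where "bs = coeff g (degree g)"
    define ct where "ct = coeff h (degree h)"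
    have an: "coeff f n = bs * ct" unfolding bs_def ct_def deg[symmetric] fgh lead_coeff_mult ..
    have a0: "coeff f 0 = coeff g 0 * coeff h 0" unfolding fgh coeff_mult_0 ..
    have b00: "coeff g 0 \<noteq> 0" and c00: "coeff h 0 \<noteq> 0" using nz a0 by auto
    have db: "degree (coeff g 0) < degree bs" using spec[OF Pg, of 0] s1 b00 unfolding bs_def by simp
    have dc: "degree (coeff h 0) < degree ct" using spec[OF Ph, of 0] t1 c00 unfolding ct_def by simp
    have bs0: "bs \<noteq> 0" and ct0: "ct \<noteq> 0" using nz an by auto
    have bsnu: "\<not> is_unit bs" using is_unit_iff_degree[OF bs0] db by simp
    have ctnu: "\<not> is_unit ct" using is_unit_iff_degree[OF ct0] dc by simp
    have dan: "degree (coeff f n) = degree bs + degree ct" unfolding an by (rule degree_mult_eq[OF bs0 ct0])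
    have da0: "degree (coeff f 0) = degree (coeff g 0) + degree (coeff h 0)"
      unfolding a0 by (rule degree_mult_eq[OF b00 c00])
    from cases show False
    proof
      assume "irreducible (coeff f n)"
      thus False using irreducibleD[OF _ an] bsnu ctnu by blast
    next
      assume "irreducible (coeff f 0) \<and>
        (\<exists>q :: 'a poly. irreducible q \<and> q dvd coeff f n \<and>
           (\<forall>r. irreducible r \<and> r dvd coeff f n \<longrightarrow> degree q \<le> degree r) \<and>
           degree (coeff f 0) + degree q \<ge> degree (coeff f n))"
      then obtain q :: "'a poly" where irr0: "irreducible (coeff f 0)"
        and qmin: "\<forall>r. irreducible r \<and> r dvd coeff f n \<longrightarrow> degree q \<le> degree r"
        and qd: "degree (coeff f 0) + degree q \<ge> degree (coeff f n)" by (elim conjE exE) fast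
      have fac: "degree q \<le> degree p" if pp: "p \<noteq> 0" "\<not> is_unit p" "p dvd coeff f n" for p
      proof -
        obtain r where r: "r dvd p" "irreducible r" using irreducible_factor_exists[OF pp(1,2)] by blast
        have "irreducible r" using r(2) .
        moreover have "r dvd coeff f n" using r(1) that(3) by (rule dvd_trans)
        ultimately have "degree q \<le> degree r" using qmin by blast
        moreover have "degree r \<le> degree p" using r(1) that(1) by (rule dvd_imp_degree_le)
        ultimately show ?thesis by simp
      qed
      have "is_unit (coeff g 0) \<or> is_unit (coeff h 0)" using irreducibleD[OF irr0 a0] .
      thus False
      proof
        assume "is_unit (coeff g 0)"
        hence "degree (coeff g 0) = 0" by (simp add: is_unit_iff_degree b00)
        moreover have "degree q \<le> degree bs" using fac[OF bs0 bsnu] an by simp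
        ultimately show False using qd dan da0 dc by linarith
      next
        assume "is_unit (coeff h 0)"
        hence "degree (coeff h 0) = 0" by (simp add: is_unit_iff_degree c00)
        moreover have "degree q \<le> degree ct" using fac[OF ct0 ctnu] an by simp
        ultimately show False using qd dan da0 db by linarith
      qed
    qed
  qed
qed

end
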